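(* Let $v_0$ be $C^4$ on $\mathbb{R}$ with bounded derivatives up to order $4$ and $v_0(x)\to0$ as $|x|\to\infty$; let $c$ be continuous and bounded on $[0,\infty)\times\mathbb{R}$, $C^1$ on $]0,\infty)\times\mathbb{R}$, with space derivatives up to order $4$ continuous and bounded on $]0,\infty)\times\mathbb{R}$. Fix $t>0$, and for each integer $n\ge1$ let $v_n^{(t)}$ be the function on $[0,t]\times\mathbb{R}$ constructed by: $\tau_k=\frac{kt}{2n}$, $v_n^{(t)}(0,\cdot)=v_0$, and for $k=0,\dots,n-1$, $$v_n^{(t)}(\tau,x)=\big(U_{2(\tau-\tau_{2k})}v_n^{(t)}(\tau_{2k},\cdot)\big)(x)\ (\tau\in[\tau_{2k},\tau_{2k+1}]),\qquad v_n^{(t)}(\tau,x)=e^{-2c(\tau_{2k+2},x)(\tau-\tau_{2k+1})}v_n^{(t)}(\tau_{2k+1},x)\ (\tau\in[\tau_{2k+1},\tau_{2k+2}]),$$ with $U_0=\mathrm{id}$ and $(U_sf)(x)=\int_{\mathbb{R}}(2\pi\,\mathrm{sh}(2s))^{-1/2}\exp\big(-\frac12\big((x^2+z^2)\frac{\mathrm{ch}(2s)}{\mathrm{sh}(2s)}-\frac{2xz}{\mathrm{sh}(2s)}\big)\big)f(z)\,dz$ for $s>0$. Then for each $x\in\mathbb{R}$ there exists $C>0$, depending on $t$ and $x$, such that for all $j\in\{0,\dots,4\}$, all $n\in\mathbb{N}^*$, all $k\in\{0,\dots,n-1\}$ and all $\tau\in\big[\frac{kt}{n},\frac{(k+1)t}{n}\big]$,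 $$\Big|\frac{\partial^jv_n^{(t)}}{\partial x^j}(\tau,x)\Big|\le C.$$
   Context: $\mathrm{ch},\mathrm{sh}$ are hyperbolic cosine and sine. *)

theory Defs
  imports "HOL-Analysis.Analysis"
begin

definition Ukernel :: "real \<Rightarrow> real \<Rightarrow> real \<Rightarrow> real" where
  "Ukernel s x z = (2 * pi * sinh (2 * s)) powr (-1/2) *
     exp (-(1/2) * ((x^2 + z^2) * cosh (2 * s) / sinh (2 * s) - 2 * x * z / sinh (2 * s)))"

definition Uop :: "real \<Rightarrow> (real \<Rightarrow> real) \<Rightarrow> real \<Rightarrow> real" where
  "Uop s f x = (if s = 0 then f x else (\<integral>z. Ukernel s x z * f z \<partial>lborel))"

definition gtau :: "real \<Rightarrow> nat \<Rightarrow> nat \<Rightarrow> real" where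
  "gtau t n j = real j * t / (2 * real n)"

text \<open>node t n c v0 k = v_n^(t)(tau_{2k}, .)\<close>
fun node :: "real \<Rightarrow> nat \<Rightarrow> (real \<Rightarrow> real \<Rightarrow> real) \<Rightarrow> (real \<Rightarrow> real) \<Rightarrow> nat \<Rightarrow> real \<Rightarrow> real" where
  "node t n c v0 0 = v0"
| "node t n c v0 (Suc k) = (\<lambda>x.
     exp (- 2 * c (gtau t n (2*k+2)) x * (gtau t n (2*k+2) - gtau t n (2*k+1))) *
     Uop (2 * (gtau t n (2*k+1) - gtau t n (2*k))) (node t n c v0 k) x)"

text \<open>The function v_n^(t)(tau, x) for tau in [0,t]. The index m selects the subinterval
  [tau_m, tau_{m+1}] (clamped to m \<le> 2n-1); even m = 2k: diffusion step, odd m = 2k+1: potential step.\<close>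
definition vn :: "real \<Rightarrow> nat \<Rightarrow> (real \<Rightarrow> real \<Rightarrow> real) \<Rightarrow> (real \<Rightarrow> real) \<Rightarrow> real \<Rightarrow> real \<Rightarrow> real" where
  "vn t n c v0 \<tau> x =
    (let m = min (2*n - 1) (nat \<lfloor>\<tau> / (t / (2 * real n))\<rfloor>); k = m div 2 in
     if even m then Uop (2 * (\<tau> - gtau t n (2*k))) (node t n c v0 k) x
     else exp (- 2 * c (gtau t n (2*k+2)) x * (\<tau> - gtau t n (2*k+1))) *
          Uop (2 * (gtau t n (2*k+1) - gtau t n (2*k))) (node t n c v0 k) x)"

end

theory Submission
  imports Defs "HOL-Probability.Distributions"
begin


lemma gauss_exp: "std_normal_density u * exp (b*u) = exp (b^2/2) * normal_density b 1 u"
proof -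
  have "exp (b*u) * exp (- (u^2/2)) = exp (b^2/2) * exp (-((u-b)^2/2))"
    unfolding mult_exp_exp by (rule arg_cong[where f=exp]) (simp add: power2_eq_square field_simps)
  then show ?thesis unfolding normal_density_def by (simp add: mult_ac)
qed

lemma gauss_exp_integrable: "integrable lborel (\<lambda>u. std_normal_density u * exp (b*u))"
  unfolding gauss_exp by simp

lemma gauss_exp_integral: "(\<integral>u. std_normal_density u * exp (b*u) \<partial>lborel) = exp (b^2/2)"
  unfolding gauss_exp by simp

lemma cosh_split: "cosh (x::real) = (exp x + exp (-x))/2"
  by (simp add: cosh_def)

lemma gauss_cosh_eq: "(\<lambda>u. std_normal_density u * cosh (K*(c+q*u))) =
   (\<lambda>u. (exp (K*c)/2) * (std_normal_density u * exp ((K*q)*u)) + (exp (-(K*c))/2) * (std_normal_density u * exp ((-(K*q))*u)))"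
proof (rule ext)
  fix u
  have "exp (K*(c+q*u)) = exp (K*c) * exp ((K*q)*u)" "exp (-(K*(c+q*u))) = exp (-(K*c)) * exp ((-(K*q))*u)"
    unfolding mult_exp_exp by (simp_all add: algebra_simps)
  then show "std_normal_density u * cosh (K*(c+q*u)) = (exp (K*c)/2) * (std_normal_density u * exp ((K*q)*u)) + (exp (-(K*c))/2) * (std_normal_density u * exp ((-(K*q))*u))"
    unfolding cosh_split by (simp add: algebra_simps)
qed

lemma gauss_cosh_integrable: "integrable lborel (\<lambda>u. std_normal_density u * cosh (K*(c+q*u)))"
  unfolding gauss_cosh_eq
  by (intro Bochner_Integration.integrable_add integrable_mult_right gauss_exp_integrable)

lemma gauss_cosh_integral: "(\<integral>u. std_normal_density u * cosh (K*(c+q*u)) \<partial>lborel) = cosh (K*c) * exp ((K*q)^2/2)"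
proof -
  have "(\<integral>u. std_normal_density u * cosh (K*(c+q*u)) \<partial>lborel) =
     (exp (K*c)/2) * (\<integral>u. std_normal_density u * exp ((K*q)*u) \<partial>lborel) + (exp (-(K*c))/2) * (\<integral>u. std_normal_density u * exp ((-(K*q))*u) \<partial>lborel)"
    unfolding gauss_cosh_eq
    by (subst Bochner_Integration.integral_add, (intro integrable_mult_right gauss_exp_integrable)+) simp
  also have "\<dots> = cosh (K*c) * exp ((K*q)^2/2)"
    unfolding gauss_exp_integral cosh_split by (simp add: field_simps)
  finally show ?thesis .
qed



abbreviation "\<phi> \<equiv> std_normal_density"

lemma phi_pos: "\<phi> u > 0" by (simp add: normal_density_pos)

lemma integrable_phi_bound:
  assumes fm: "f \<in> borel_measurable borel" and fb: "\<And>y. \<bar>f y\<bar> \<le> B * cosh (K*y)"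
  shows "integrable lborel (\<lambda>u. \<phi> u * f (c + q*u))"
proof (rule Bochner_Integration.integrable_bound[where f="\<lambda>u. B * (\<phi> u * cosh (K*(c+q*u)))"])
  show "integrable lborel (\<lambda>u. B * (\<phi> u * cosh (K*(c+q*u))))"
    by (intro integrable_mult_right gauss_cosh_integrable)
  show "(\<lambda>u. \<phi> u * f (c + q*u)) \<in> borel_measurable lborel" using fm by measurable
  show "AE u in lborel. norm (\<phi> u * f (c + q*u)) \<le> norm (B * (\<phi> u * cosh (K*(c+q*u))))"
  proof (rule AE_I2)
    fix u
    have "0 \<le> B" using fb[of 0] by simp
    have "\<bar>\<phi> u * f (c + q*u)\<bar> = \<phi> u * \<bar>f (c+q*u)\<bar>" using phi_pos[of u] by (simp add: abs_mult)
    also have "\<dots> \<le> \<phi> u * (B * cosh (K*(c+q*u)))" using phi_pos[of u] fb[of "c+q*u"]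
      by (intro mult_left_mono) auto
    finally show "norm (\<phi> u * f (c + q*u)) \<le> norm (B * (\<phi> u * cosh (K*(c+q*u))))"
      using \<open>0 \<le> B\<close> phi_pos[of u] by (simp add: abs_mult mult_ac)
  qed
qed

lemma integral_phi_bound:
  assumes fm: "f \<in> borel_measurable borel" and fb: "\<And>y. \<bar>f y\<bar> \<le> B * cosh (K*y)"
  shows "\<bar>\<integral>u. \<phi> u * f (c + q*u) \<partial>lborel\<bar> \<le> B * (cosh (K*c) * exp ((K*q)^2/2))"
proof -
  have "\<bar>\<integral>u. \<phi> u * f (c + q*u) \<partial>lborel\<bar> \<le> (\<integral>u. B * (\<phi> u * cosh (K*(c+q*u))) \<partial>lborel)"
  proof (rule integral_abs_bound_integral)
    show "integrable lborel (\<lambda>u. \<phi> u * f (c + q*u))" by (rule integrable_phi_bound[OF fm fb])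
    show "integrable lborel (\<lambda>u. B * (\<phi> u * cosh (K*(c+q*u))))"
      by (intro integrable_mult_right gauss_cosh_integrable)
    fix u
    have "\<bar>\<phi> u * f (c + q*u)\<bar> = \<phi> u * \<bar>f (c+q*u)\<bar>" using phi_pos[of u] by (simp add: abs_mult)
    also have "\<dots> \<le> \<phi> u * (B * cosh (K*(c+q*u)))" using phi_pos[of u] fb[of "c+q*u"]
      by (intro mult_left_mono) auto
    finally show "\<bar>\<phi> u * f (c + q*u)\<bar> \<le> B * (\<phi> u * cosh (K*(c+q*u)))" by (simp add: mult_ac)
  qed
  also have "\<dots> = B * (cosh (K*c) * exp ((K*q)^2/2))"
    by (simp add: gauss_cosh_integral)
  finally show ?thesis .
qed

lemma cosh_shift_le: "cosh ((a::real) + b) \<le> cosh a * exp \<bar>b\<bar>"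
proof -
  have "exp (a+b) \<le> exp (a + \<bar>b\<bar>)" "exp (-(a+b)) \<le> exp (-a + \<bar>b\<bar>)" by auto
  then have "exp (a+b) + exp (-(a+b)) \<le> exp (a + \<bar>b\<bar>) + exp (-a + \<bar>b\<bar>)" by linarith
  also have "\<dots> = (exp a + exp (-a)) * exp \<bar>b\<bar>" by (simp add: exp_add[symmetric] distrib_right)
  finally have "exp (a+b) + exp (-(a+b)) \<le> (exp a + exp (-a)) * exp \<bar>b\<bar>" .
  then show ?thesis unfolding cosh_split by (simp add: divide_right_mono)
qed

lemma cosh_mono_abs: "\<bar>a\<bar> \<le> \<bar>b\<bar> \<Longrightarrow> cosh (a::real) \<le> cosh b"
  by (metis cosh_real_abs cosh_real_nonneg_le_iff abs_ge_zero)

lemma mvt_bound: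
  assumes der: "\<And>y. (h has_real_derivative h' y) (at y)"
    and hb: "\<And>y. \<bar>h' y\<bar> \<le> B * cosh (K*y)" and K: "K \<ge> 0"
  shows "\<bar>h (y+d) - h y\<bar> \<le> \<bar>d\<bar> * (B * cosh (K*y) * exp (K*\<bar>d\<bar>))"
proof -
  have B: "0 \<le> B" using hb[of 0] by simp
  have key: "\<bar>h' z\<bar> \<le> B * cosh (K*y) * exp (K*\<bar>d\<bar>)" if "\<bar>z - y\<bar> \<le> \<bar>d\<bar>" for z
  proof -
    have "cosh (K*z) = cosh (K*y + K*(z-y))" by (simp add: algebra_simps)
    also have "\<dots> \<le> cosh (K*y) * exp \<bar>K*(z-y)\<bar>" by (rule cosh_shift_le)
    also have "\<dots> \<le> cosh (K*y) * exp (K*\<bar>d\<bar>)"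
      using that K by (intro mult_left_mono) (auto simp: abs_mult intro!: mult_left_mono)
    finally show ?thesis using hb[of z] B
      by (smt (verit) mult_left_mono mult.assoc)
  qed
  show ?thesis
  proof (cases d "0::real" rule: linorder_cases)
    case less
    obtain z where z: "y+d < z" "z < y" "h y - h (y+d) = (y - (y+d)) * h' z"
      using MVT2[of "y+d" y h h'] der less by auto
    have "h (y+d) - h y = d * h' z" using z by (simp add: algebra_simps)
    then have "\<bar>h (y+d) - h y\<bar> = \<bar>d\<bar> * \<bar>h' z\<bar>" by (simp add: abs_mult)
    also have "\<dots> \<le> \<bar>d\<bar> * (B * cosh (K*y) * exp (K*\<bar>d\<bar>))"
      using key[of z] z less by (intro mult_left_mono) auto
    finally show ?thesis .
  next
    case equal then show ?thesis by simp
  next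
    case greater
    obtain z where z: "y < z" "z < y+d" "h (y+d) - h y = (y+d - y) * h' z"
      using MVT2[of y "y+d" h h'] der greater by auto
    have "h (y+d) - h y = d * h' z" using z by (simp add: algebra_simps)
    then have "\<bar>h (y+d) - h y\<bar> = \<bar>d\<bar> * \<bar>h' z\<bar>" by (simp add: abs_mult)
    also have "\<dots> \<le> \<bar>d\<bar> * (B * cosh (K*y) * exp (K*\<bar>d\<bar>))"
      using key[of z] z greater by (intro mult_left_mono) auto
    finally show ?thesis .
  qed
qed



lemma diff_int:
  assumes der: "\<And>y. (h has_real_derivative h' y) (at y)"
    and h'm: "h' \<in> borel_measurable borel"
    and h'b: "\<And>y. \<bar>h' y\<bar> \<le> B * cosh (K*y)" and K: "K \<ge> 0"
    and hb: "\<And>y. \<bar>h y\<bar> \<le> B0 * cosh (K0*y)"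
  shows "((\<lambda>x. \<integral>u. \<phi> u * h (p*x + q*u) \<partial>lborel) has_real_derivative
           p * (\<integral>u. \<phi> u * h' (p*x + q*u) \<partial>lborel)) (at x)"
proof -
  have hc: "continuous_on UNIV h" using der
    by (meson DERIV_isCont continuous_at_imp_continuous_on)
  have hm[measurable]: "h \<in> borel_measurable borel" by (rule borel_measurable_continuous_onI[OF hc])
  note h'm[measurable]
  define F where "F = (\<lambda>x. \<integral>u. \<phi> u * h (p*x + q*u) \<partial>lborel)"
  have intF: "integrable lborel (\<lambda>u. \<phi> u * h (c + q*u))" for c
    by (rule integrable_phi_bound[OF hm hb])
  have intF': "integrable lborel (\<lambda>u. \<phi> u * h' (c + q*u))" for c
    by (rule integrable_phi_bound[OF h'm h'b])
  have "((\<lambda>d. (F (x + d) - F x) / d) \<longlongrightarrow> p * (\<integral>u. \<phi> u * h' (p*x + q*u) \<partial>lborel)) (at 0)"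
    unfolding tendsto_at_iff_sequentially comp_def
  proof (intro allI impI)
    fix X :: "nat \<Rightarrow> real"
    assume X0: "\<forall>i. X i \<in> UNIV - {0}" and Xl: "X \<longlonglongrightarrow> 0"
    obtain H where H: "\<And>i. norm (X i) \<le> H" "H > 0"
      using convergent_imp_Bseq[OF convergentI[OF Xl]] unfolding Bseq_def by auto
    define s where "s = (\<lambda>i u. \<phi> u * ((h (p*x + q*u + p * X i) - h (p*x+q*u)) / X i))"
    define f where "f = (\<lambda>u. \<phi> u * (h' (p*x+q*u) * p))"
    define w where "w = (\<lambda>u. \<bar>p\<bar> * B * exp (K*\<bar>p\<bar>*H) * (\<phi> u * cosh (K*(p*x+q*u))))"
    have quot: "(F (x + X i) - F x) / X i = integral\<^sup>L lborel (s i)" for i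
    proof -
      have "F (x + X i) - F x = (\<integral>u. \<phi> u * h (p*x + p*X i + q*u) - \<phi> u * h (p*x + q*u) \<partial>lborel)"
        unfolding F_def by (subst Bochner_Integration.integral_diff[OF intF intF]) (simp add: algebra_simps)
      also have "\<dots> = (\<integral>u. \<phi> u * (h (p*x + q*u + p * X i) - h (p*x+q*u)) \<partial>lborel)"
        by (simp add: algebra_simps)
      finally show ?thesis unfolding s_def
        by simp
    qed
    have "(\<lambda>i. integral\<^sup>L lborel (s i)) \<longlonglongrightarrow> integral\<^sup>L lborel f"
    proof (rule integral_dominated_convergence[where w=w])
      show "f \<in> borel_measurable lborel" unfolding f_def by measurable
      show "s i \<in> borel_measurable lborel" for i unfolding s_def by measurable
      show "integrable lborel w" unfolding w_def
        by (intro integrable_mult_right gauss_cosh_integrable)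
      show "AE u in lborel. (\<lambda>i. s i u) \<longlonglongrightarrow> f u"
      proof (rule AE_I2)
        fix u
        define y where "y = p*x+q*u"
        have d1: "(h has_real_derivative h' y) (at ((\<lambda>d. y+p*d) 0))" using der[of y] by simp
        have d2: "((\<lambda>d. y+p*d) has_real_derivative p) (at 0)" by (auto intro!: derivative_eq_intros)
        have "((\<lambda>d. h (y + p*d)) has_real_derivative h' y * p) (at 0)"
          using DERIV_chain2[OF d1 d2] by simp
        then have "((\<lambda>d. (h (y + p*(0+d)) - h (y + p*0)) / d) \<longlongrightarrow> h' y * p) (at 0)"
          unfolding DERIV_def .
        then have "(\<lambda>i. (h (y + p*(0+X i)) - h (y + p*0)) / X i) \<longlonglongrightarrow> h' y * p"
          using X0 Xl unfolding tendsto_at_iff_sequentially comp_def by blast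
        then have "(\<lambda>i. \<phi> u * ((h (y + p*X i) - h y) / X i)) \<longlonglongrightarrow> \<phi> u * (h' y * p)"
          by (intro tendsto_mult_left) simp
        then show "(\<lambda>i. s i u) \<longlonglongrightarrow> f u" unfolding s_def f_def y_def .
      qed
      show "AE u in lborel. norm (s i u) \<le> w u" for i
      proof (rule AE_I2)
        fix u
        define y where "y = p*x+q*u"
        have Xi: "X i \<noteq> 0" using X0 by auto
        have B: "0 \<le> B" using h'b[of 0] by simp
        have "\<bar>h (y + p*X i) - h y\<bar> \<le> \<bar>p*X i\<bar> * (B * cosh (K*y) * exp (K*\<bar>p*X i\<bar>))"
          by (rule mvt_bound[OF der h'b K])
        also have "\<dots> \<le> \<bar>p*X i\<bar> * (B * cosh (K*y) * exp (K*\<bar>p\<bar>*H))"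
        proof -
          have "K*(\<bar>p\<bar>*\<bar>X i\<bar>) \<le> K*(\<bar>p\<bar>*H)" using H(1)[of i] K
            by (intro mult_left_mono) auto
          then show ?thesis using K B
            by (intro mult_left_mono) (auto simp: abs_mult mult_ac)
        qed
        finally have "\<bar>(h (y + p*X i) - h y) / X i\<bar> \<le> \<bar>p\<bar> * (B * cosh (K*y) * exp (K*\<bar>p\<bar>*H))"
          using Xi by (simp add: abs_mult divide_le_eq mult_ac)
        then have "\<phi> u * \<bar>(h (y + p*X i) - h y) / X i\<bar> \<le> \<phi> u * (\<bar>p\<bar> * (B * cosh (K*y) * exp (K*\<bar>p\<bar>*H)))"
          using phi_pos[of u] by (intro mult_left_mono) auto
        then show "norm (s i u) \<le> w u" unfolding s_def w_def y_def
          using phi_pos[of u] by (simp add: abs_mult mult_ac)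
      qed
    qed
    moreover have "integral\<^sup>L lborel f = p * (\<integral>u. \<phi> u * h' (p*x + q*u) \<partial>lborel)"
      unfolding f_def by (simp add: mult_ac)
    ultimately show "(\<lambda>i. (F (x + X i) - F x) / X i) \<longlonglongrightarrow> p * (\<integral>u. \<phi> u * h' (p*x + q*u) \<partial>lborel)"
      unfolding quot by simp
  qed
  then show ?thesis unfolding DERIV_def F_def .
qed



definition dfam :: "(nat \<Rightarrow> real \<Rightarrow> real) \<Rightarrow> bool" where
  "dfam D \<longleftrightarrow> (\<forall>j<4. \<forall>x. (D j has_real_derivative D (Suc j) x) (at x))"

definition good :: "real \<Rightarrow> (nat \<Rightarrow> real \<Rightarrow> real) \<Rightarrow> bool" where
  "good B D \<longleftrightarrow> dfam D \<and> D 4 \<in> borel_measurable borel \<and>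
     (\<forall>j\<le>4. \<forall>x. \<bar>D j x\<bar> \<le> B * cosh (real j * x))"

lemma dfam_D: "dfam D \<Longrightarrow> j < 4 \<Longrightarrow> (D j has_real_derivative D (Suc j) x) (at x)"
  unfolding dfam_def by blast

lemma dfam_meas: assumes "dfam D" "D 4 \<in> borel_measurable borel" "j \<le> 4"
  shows "D j \<in> borel_measurable borel"
proof (cases "j = 4")
  case False
  then have "j < 4" using assms by auto
  then have "continuous_on UNIV (D j)" using dfam_D[OF assms(1)]
    by (meson DERIV_isCont continuous_at_imp_continuous_on)
  then show ?thesis by (rule borel_measurable_continuous_onI)
qed (use assms in auto)

lemma dfam_cont: assumes "dfam D" "j < 4" shows "continuous_on UNIV (D j)"
  using dfam_D[OF assms] by (meson DERIV_isCont continuous_at_imp_continuous_on)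

lemma dfam_deriv: assumes "dfam D" shows "j \<le> 4 \<Longrightarrow> (deriv ^^ j) (D 0) = D j"
proof (induction j)
  case 0 then show ?case by simp
next
  case (Suc j)
  then have "(deriv ^^ j) (D 0) = D j" by simp
  then show ?case using dfam_D[OF assms, of j] Suc.prems
    by (auto intro!: ext DERIV_imp_deriv)
qed

fun leib :: "(nat \<Rightarrow> real \<Rightarrow> real) \<Rightarrow> (nat \<Rightarrow> real \<Rightarrow> real) \<Rightarrow> nat \<Rightarrow> real \<Rightarrow> real" where
  "leib a b 0 x = a 0 x * b 0 x"
| "leib a b (Suc 0) x = a 1 x * b 0 x + a 0 x * b 1 x"
| "leib a b (Suc (Suc 0)) x = a 2 x * b 0 x + 2 * (a 1 x * b 1 x) + a 0 x * b 2 x"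
| "leib a b (Suc (Suc (Suc 0))) x = a 3 x * b 0 x + 3 * (a 2 x * b 1 x) + 3 * (a 1 x * b 2 x) + a 0 x * b 3 x"
| "leib a b (Suc (Suc (Suc (Suc 0)))) x = a 4 x * b 0 x + 4 * (a 3 x * b 1 x) + 6 * (a 2 x * b 2 x) + 4 * (a 1 x * b 3 x) + a 0 x * b 4 x"
| "leib a b (Suc (Suc (Suc (Suc (Suc n))))) x = 0"

lemma leib_eqs:
  "leib a b 0 = (\<lambda>x. a 0 x * b 0 x)"
  "leib a b (Suc 0) = (\<lambda>x. a 1 x * b 0 x + a 0 x * b 1 x)"
  "leib a b (Suc (Suc 0)) = (\<lambda>x. a 2 x * b 0 x + 2 * (a 1 x * b 1 x) + a 0 x * b 2 x)"
  "leib a b (Suc (Suc (Suc 0))) = (\<lambda>x. a 3 x * b 0 x + 3 * (a 2 x * b 1 x) + 3 * (a 1 x * b 2 x) + a 0 x * b 3 x)"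
  "leib a b (Suc (Suc (Suc (Suc 0)))) = (\<lambda>x. a 4 x * b 0 x + 4 * (a 3 x * b 1 x) + 6 * (a 2 x * b 2 x) + 4 * (a 1 x * b 3 x) + a 0 x * b 4 x)"
  by (auto intro!: ext)

lemma dfam_leib: assumes a: "dfam a" and b: "dfam b" shows "dfam (leib a b)"
proof -
  have A: "\<And>x. (a 0 has_real_derivative a 1 x) (at x)" "\<And>x. (a 1 has_real_derivative a 2 x) (at x)"
       "\<And>x. (a 2 has_real_derivative a 3 x) (at x)" "\<And>x. (a 3 has_real_derivative a 4 x) (at x)"
    using dfam_D[OF a, of 0] dfam_D[OF a, of 1] dfam_D[OF a, of 2] dfam_D[OF a, of 3]
    by (simp_all add: numeral_eq_Suc)
  have B: "\<And>x. (b 0 has_real_derivative b 1 x) (at x)" "\<And>x. (b 1 has_real_derivative b 2 x) (at x)"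
       "\<And>x. (b 2 has_real_derivative b 3 x) (at x)" "\<And>x. (b 3 has_real_derivative b 4 x) (at x)"
    using dfam_D[OF b, of 0] dfam_D[OF b, of 1] dfam_D[OF b, of 2] dfam_D[OF b, of 3]
    by (simp_all add: numeral_eq_Suc)
  have E: "(f has_real_derivative D) (at x) \<Longrightarrow> D = E \<Longrightarrow> (f has_real_derivative E) (at x)" for f D E x
    by simp
  have d0: "(leib a b 0 has_real_derivative leib a b (Suc 0) x) (at x)" for x
    unfolding leib_eqs by (auto intro!: derivative_eq_intros A B A[unfolded One_nat_def] B[unfolded One_nat_def] simp: algebra_simps)
  have d1: "(leib a b (Suc 0) has_real_derivative leib a b (Suc (Suc 0)) x) (at x)" for x
    unfolding leib_eqs by (auto intro!: derivative_eq_intros A B A[unfolded One_nat_def] B[unfolded One_nat_def] simp: algebra_simps)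
  have d2: "(leib a b (Suc (Suc 0)) has_real_derivative leib a b (Suc (Suc (Suc 0))) x) (at x)" for x
    unfolding leib_eqs by (auto intro!: derivative_eq_intros A B A[unfolded One_nat_def] B[unfolded One_nat_def] simp: algebra_simps)
  have d3: "(leib a b (Suc (Suc (Suc 0))) has_real_derivative leib a b (Suc (Suc (Suc (Suc 0)))) x) (at x)" for x
    unfolding leib_eqs by (auto intro!: derivative_eq_intros A B A[unfolded One_nat_def] B[unfolded One_nat_def] simp: algebra_simps)
  show ?thesis unfolding dfam_def
  proof (intro allI impI)
    fix j :: nat and x :: real
    assume "j < 4"
    then have "j = 0 \<or> j = Suc 0 \<or> j = Suc (Suc 0) \<or> j = Suc (Suc (Suc 0))" by auto
    then show "(leib a b j has_real_derivative leib a b (Suc j) x) (at x)"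
      using d0 d1 d2 d3 by (elim disjE) simp_all
  qed
qed

lemma leib_eqs_num:
  "leib a b 1 = (\<lambda>x. a 1 x * b 0 x + a 0 x * b 1 x)"
  "leib a b 2 = (\<lambda>x. a 2 x * b 0 x + 2 * (a 1 x * b 1 x) + a 0 x * b 2 x)"
  "leib a b 3 = (\<lambda>x. a 3 x * b 0 x + 3 * (a 2 x * b 1 x) + 3 * (a 1 x * b 2 x) + a 0 x * b 3 x)"
  "leib a b 4 = (\<lambda>x. a 4 x * b 0 x + 4 * (a 3 x * b 1 x) + 6 * (a 2 x * b 2 x) + 4 * (a 1 x * b 3 x) + a 0 x * b 4 x)"
  by (auto simp: numeral_eq_Suc intro!: ext)

lemma leib_meas: assumes "dfam a" "dfam b" "a 4 \<in> borel_measurable borel" "b 4 \<in> borel_measurable borel"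
  shows "leib a b 4 \<in> borel_measurable borel"
proof -
  have [measurable]: "a j \<in> borel_measurable borel" "b j \<in> borel_measurable borel" if "j \<le> 4" for j
    using dfam_meas[OF assms(1,3) that] dfam_meas[OF assms(2,4) that] by auto
  show ?thesis unfolding leib_eqs_num by measurable
qed



lemma cosh_le_exp_abs: "cosh (y::real) \<le> exp \<bar>y\<bar>"
  unfolding cosh_split by (cases "y \<ge> 0") auto

lemma exp_abs_le_cosh: "exp \<bar>y::real\<bar> \<le> 2 * cosh y"
  unfolding cosh_split by (cases "y \<ge> 0") auto

lemma tb:
  fixes u v \<gamma> \<beta> i m x :: real
  assumes u: "\<bar>u\<bar> \<le> \<gamma> * exp (i*\<bar>x\<bar>)" and v: "\<bar>v\<bar> \<le> \<beta> * cosh (m*x)"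
    and i: "0 \<le> i" and m: "0 \<le> m"
  shows "\<bar>u * v\<bar> \<le> 2 * (\<gamma> * \<beta> * cosh ((i+m)*x))"
proof -
  have "0 \<le> \<gamma> * exp (i*\<bar>x\<bar>)" using u by (meson abs_ge_zero order_trans)
  then have g: "0 \<le> \<gamma>" by (simp add: zero_le_mult_iff)
  have "0 \<le> \<beta> * cosh (m*x)" using v by (meson abs_ge_zero order_trans)
  then have b: "0 \<le> \<beta>" using cosh_real_pos[of "m*x"] by (simp add: zero_le_mult_iff)
  have "\<bar>u * v\<bar> \<le> (\<gamma> * exp (i*\<bar>x\<bar>)) * (\<beta> * cosh (m*x))"
    unfolding abs_mult using g by (intro mult_mono u v) auto
  also have "\<dots> \<le> (\<gamma> * exp (i*\<bar>x\<bar>)) * (\<beta> * exp (m*\<bar>x\<bar>))"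
  proof -
    have "cosh (m*x) \<le> exp (m*\<bar>x\<bar>)" using cosh_le_exp_abs[of "m*x"] m by (simp add: abs_mult)
    then show ?thesis using g b by (intro mult_left_mono) auto
  qed
  also have "\<dots> = \<gamma> * \<beta> * (exp (i*\<bar>x\<bar>) * exp (m*\<bar>x\<bar>))" by (simp only: mult_ac)
  also have "exp (i*\<bar>x\<bar>) * exp (m*\<bar>x\<bar>) = exp \<bar>(i+m)*x\<bar>"
  proof -
    have "\<bar>(i+m)*x\<bar> = (i+m)*\<bar>x\<bar>" using i m by (simp add: abs_mult)
    then show ?thesis by (simp add: exp_add[symmetric] distrib_right)
  qed
  also have "\<gamma> * \<beta> * exp \<bar>(i+m)*x\<bar> \<le> \<gamma> * \<beta> * (2 * cosh ((i+m)*x))"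
    using g b exp_abs_le_cosh by (intro mult_left_mono) auto
  finally show ?thesis by simp
qed

lemma sum_bnd: "\<bar>p\<bar> \<le> P \<Longrightarrow> \<bar>q\<bar> \<le> Q \<Longrightarrow> \<bar>p + q\<bar> \<le> P + (Q::real)"
  by linarith
lemma scal_bnd: "\<bar>p\<bar> \<le> P \<Longrightarrow> \<bar>c * p\<bar> \<le> \<bar>c\<bar> * (P::real)"
  by (simp add: abs_mult mult_left_mono)

lemma leib_bound:
  assumes a0: "\<And>x. \<bar>a 0 x\<bar> \<le> \<alpha>"
    and ai: "\<And>i x. 1 \<le> i \<Longrightarrow> i \<le> 4 \<Longrightarrow> \<bar>a i x\<bar> \<le> \<gamma> * exp (real i * \<bar>x\<bar>)"
    and bm: "\<And>m x. m \<le> 4 \<Longrightarrow> \<bar>b m x\<bar> \<le> \<beta> * cosh (real m * x)"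
    and j: "j \<le> 4"
  shows "\<bar>leib a b j x\<bar> \<le> (\<alpha> + 32*\<gamma>) * \<beta> * cosh (real j * x)"
proof -
  have b: "0 \<le> \<beta>" using bm[of 0 0] by simp
  have g: "0 \<le> \<gamma>" using ai[of 1 0] by simp
  have t0: "\<bar>a 0 x * b m x\<bar> \<le> \<alpha> * \<beta> * cosh (real m * x)" if "m \<le> 4" for m
    unfolding abs_mult mult.assoc using a0[of x] bm[OF that, of x] b
    by (intro mult_mono) (auto intro: order_trans[OF abs_ge_zero a0[of x]])
  have t: "\<bar>a i x * b m x\<bar> \<le> 2 * (\<gamma> * \<beta> * cosh (real j * x))"
    if "1 \<le> i" "i \<le> 4" "m \<le> 4" "i + m = j" for i m
    using tb[OF ai[OF that(1,2)] bm[OF that(3)]] unfolding that(4)[symmetric] of_nat_add by simp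
  have e: "(\<alpha> + 32*\<gamma>) * \<beta> * cosh (real j * x) = \<alpha> * \<beta> * cosh (real j * x) + 32 * (\<gamma> * \<beta> * cosh (real j * x))"
    by (simp add: algebra_simps)
  have cg: "0 \<le> \<gamma> * \<beta> * cosh (real j * x)" using g b by simp
  have "j = 0 \<or> j = 1 \<or> j = 2 \<or> j = 3 \<or> j = 4" using j by auto
  then have "\<bar>leib a b j x\<bar> \<le> \<alpha> * \<beta> * cosh (real j * x) + 32 * (\<gamma> * \<beta> * cosh (real j * x))"
  proof (elim disjE)
    assume j0: "j = 0"
    show ?thesis using t0[OF j] cg unfolding j0 by (simp only: leib.simps)
  next
    assume j1: "j = 1"
    have f: "\<bar>a 1 x * b 0 x\<bar> \<le> 2 * (\<gamma> * \<beta> * cosh (real j * x))"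
      by (rule t; simp add: j1)
    show ?thesis using t0[OF j] f cg unfolding j1 leib_eqs_num
      apply -
      apply (rule order_trans, (rule sum_bnd | assumption | (rule scal_bnd, assumption))+)
      apply (simp add: mult_ac)
      done
  next
    assume j2: "j = 2"
    have f: "\<bar>a 2 x * b 0 x\<bar> \<le> 2 * (\<gamma> * \<beta> * cosh (real j * x))"
       "\<bar>a 1 x * b 1 x\<bar> \<le> 2 * (\<gamma> * \<beta> * cosh (real j * x))"
      by (rule t; simp add: j2)+
    show ?thesis using t0[OF j] f cg unfolding j2 leib_eqs_num
      apply -
      apply (rule order_trans, (rule sum_bnd | assumption | (rule scal_bnd, assumption))+)
      apply (simp add: mult_ac)
      done
  next
    assume j3: "j = 3"
    have f: "\<bar>a 3 x * b 0 x\<bar> \<le> 2 * (\<gamma> * \<beta> * cosh (real j * x))"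
       "\<bar>a 2 x * b 1 x\<bar> \<le> 2 * (\<gamma> * \<beta> * cosh (real j * x))"
       "\<bar>a 1 x * b 2 x\<bar> \<le> 2 * (\<gamma> * \<beta> * cosh (real j * x))"
      by (rule t; simp add: j3)+
    show ?thesis using t0[OF j] f cg unfolding j3 leib_eqs_num
      apply -
      apply (rule order_trans, (rule sum_bnd | assumption | (rule scal_bnd, assumption))+)
      apply (simp add: mult_ac)
      done
  next
    assume j4: "j = 4"
    have f: "\<bar>a 4 x * b 0 x\<bar> \<le> 2 * (\<gamma> * \<beta> * cosh (real j * x))"
       "\<bar>a 3 x * b 1 x\<bar> \<le> 2 * (\<gamma> * \<beta> * cosh (real j * x))"
       "\<bar>a 2 x * b 2 x\<bar> \<le> 2 * (\<gamma> * \<beta> * cosh (real j * x))"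
       "\<bar>a 1 x * b 3 x\<bar> \<le> 2 * (\<gamma> * \<beta> * cosh (real j * x))"
      by (rule t; simp add: j4)+
    show ?thesis using t0[OF j] f cg unfolding j4 leib_eqs_num
      apply -
      apply (rule order_trans, (rule sum_bnd | assumption | (rule scal_bnd, assumption))+)
      apply (simp add: mult_ac)
      done
  qed
  then show ?thesis unfolding e .
qed



fun qpoly :: "(nat \<Rightarrow> real \<Rightarrow> real) \<Rightarrow> nat \<Rightarrow> real \<Rightarrow> real" where
  "qpoly u 0 x = 1"
| "qpoly u (Suc 0) x = u 1 x"
| "qpoly u (Suc (Suc 0)) x = u 2 x + u 1 x * u 1 x"
| "qpoly u (Suc (Suc (Suc 0))) x = u 3 x + 3 * (u 1 x * u 2 x) + u 1 x * u 1 x * u 1 x"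
| "qpoly u (Suc (Suc (Suc (Suc 0)))) x = u 4 x + 4 * (u 1 x * u 3 x) + 3 * (u 2 x * u 2 x)
     + 6 * (u 1 x * u 1 x * u 2 x) + u 1 x * u 1 x * u 1 x * u 1 x"
| "qpoly u (Suc (Suc (Suc (Suc (Suc n))))) x = 0"

definition efam :: "real \<Rightarrow> (nat \<Rightarrow> real \<Rightarrow> real) \<Rightarrow> nat \<Rightarrow> real \<Rightarrow> real" where
  "efam r u j x = r * qpoly u j x * exp (u 0 x)"

lemma dfam_efam: assumes u: "dfam u" shows "dfam (efam r u)"
proof -
  have U: "\<And>x. (u 0 has_real_derivative u 1 x) (at x)" "\<And>x. (u 1 has_real_derivative u 2 x) (at x)"
       "\<And>x. (u 2 has_real_derivative u 3 x) (at x)" "\<And>x. (u 3 has_real_derivative u 4 x) (at x)"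
    using dfam_D[OF u, of 0] dfam_D[OF u, of 1] dfam_D[OF u, of 2] dfam_D[OF u, of 3]
    by (simp_all add: numeral_eq_Suc)
  note U' = U U[unfolded One_nat_def]
  have e: "efam r u j = (\<lambda>x. r * qpoly u j x * exp (u 0 x))" for j
    by (simp add: efam_def[abs_def])
  have d0: "(efam r u 0 has_real_derivative efam r u (Suc 0) x) (at x)" for x
    unfolding e by (auto intro!: derivative_eq_intros U' simp: algebra_simps)
  have d1: "(efam r u (Suc 0) has_real_derivative efam r u (Suc (Suc 0)) x) (at x)" for x
    unfolding e by (auto intro!: derivative_eq_intros U' simp: algebra_simps)
  have d2: "(efam r u (Suc (Suc 0)) has_real_derivative efam r u (Suc (Suc (Suc 0))) x) (at x)" for x
    unfolding e by (auto intro!: derivative_eq_intros U' simp: algebra_simps)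
  have d3: "(efam r u (Suc (Suc (Suc 0))) has_real_derivative efam r u (Suc (Suc (Suc (Suc 0)))) x) (at x)" for x
    unfolding e by (auto intro!: derivative_eq_intros U' simp: algebra_simps)
  show ?thesis unfolding dfam_def
  proof (intro allI impI)
    fix j :: nat and x :: real
    assume "j < 4"
    then have "j = 0 \<or> j = Suc 0 \<or> j = Suc (Suc 0) \<or> j = Suc (Suc (Suc 0))" by auto
    then show "(efam r u j has_real_derivative efam r u (Suc j) x) (at x)"
      using d0 d1 d2 d3 by (elim disjE) simp_all
  qed
qed

lemma qpoly_num:
  "qpoly u 1 x = u 1 x"
  "qpoly u 2 x = u 2 x + u 1 x * u 1 x"
  "qpoly u 3 x = u 3 x + 3 * (u 1 x * u 2 x) + u 1 x * u 1 x * u 1 x"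
  "qpoly u 4 x = u 4 x + 4 * (u 1 x * u 3 x) + 3 * (u 2 x * u 2 x)
     + 6 * (u 1 x * u 1 x * u 2 x) + u 1 x * u 1 x * u 1 x * u 1 x"
  by (simp_all add: numeral_eq_Suc)

lemma scal_num: "\<bar>p\<bar> \<le> P \<Longrightarrow> \<bar>numeral n * p\<bar> \<le> numeral n * (P::real)"
  by (simp add: abs_mult mult_left_mono)
lemma prod_bnd: "\<bar>p\<bar> \<le> P \<Longrightarrow> \<bar>q\<bar> \<le> Q \<Longrightarrow> \<bar>p * q\<bar> \<le> P * (Q::real)"
  unfolding abs_mult by (rule mult_mono) auto

lemma monb:
  fixes lam Lam x :: real
  assumes l: "0 \<le> lam" "lam \<le> Lam" and k: "1 \<le> k" "k \<le> i" "i \<le> 4"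
  shows "(lam * exp \<bar>x\<bar>) ^ k \<le> lam * (1+Lam)^3 * exp (real i * \<bar>x\<bar>)"
proof -
  obtain k' where k': "k = Suc k'" using k by (cases k) auto
  have "lam ^ k' \<le> (1+Lam) ^ k'" using l by (intro power_mono) auto
  also have "\<dots> \<le> (1+Lam)^3" using l k k' by (intro power_increasing) auto
  finally have "lam ^ k \<le> lam * (1+Lam)^3" unfolding k' using l by (simp add: mult_left_mono)
  moreover have "exp \<bar>x\<bar> ^ k \<le> exp (real i * \<bar>x\<bar>)"
    using k by (simp add: exp_of_nat_mult[symmetric] mult_right_mono)
  ultimately show ?thesis unfolding power_mult_distrib
    using l by (intro mult_mono) auto
qed

lemma qpoly_bound:
  fixes lam Lam x :: real
  assumes ub: "\<And>i. 1 \<le> i \<Longrightarrow> i \<le> 4 \<Longrightarrow> \<bar>u i x\<bar> \<le> lam * exp \<bar>x\<bar>"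
    and l: "0 \<le> lam" "lam \<le> Lam" and i: "1 \<le> i" "i \<le> 4"
  shows "\<bar>qpoly u i x\<bar> \<le> 15 * (lam * (1+Lam)^3 * exp (real i * \<bar>x\<bar>))"
proof -
  define U where "U = lam * exp \<bar>x\<bar>"
  define G where "G = lam * (1+Lam)^3 * exp (real i * \<bar>x\<bar>)"
  have b: "\<bar>u 1 x\<bar> \<le> U" "\<bar>u 2 x\<bar> \<le> U" "\<bar>u 3 x\<bar> \<le> U" "\<bar>u 4 x\<bar> \<le> U"
    using ub[of 1] ub[of 2] ub[of 3] ub[of 4] unfolding U_def by auto
  have U0: "0 \<le> U" unfolding U_def using l by simp
  have G0: "0 \<le> G" unfolding G_def using l by simp
  have mk: "U ^ k \<le> G" if "1 \<le> k" "k \<le> i" for k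
    unfolding U_def G_def using monb[OF l that i(2)] .
  have "i = 1 \<or> i = 2 \<or> i = 3 \<or> i = 4" using i by auto
  then have "\<bar>qpoly u i x\<bar> \<le> 15 * G"
  proof (elim disjE)
    assume i1: "i = 1"
    have "\<bar>qpoly u i x\<bar> \<le> U" unfolding i1 qpoly_num using b by simp
    then show ?thesis using mk[of 1] G0 by (simp add: i1)
  next
    assume i2: "i = 2"
    have "\<bar>qpoly u i x\<bar> \<le> U + U * U" unfolding i2 qpoly_num
      by (rule sum_bnd | rule scal_num | rule prod_bnd | rule b)+
    then show ?thesis using mk[of 1] mk[of 2] G0 i2 by (simp add: power2_eq_square)
  next
    assume i3: "i = 3"
    have "\<bar>qpoly u i x\<bar> \<le> U + 3 * (U * U) + U * U * U" unfolding i3 qpoly_num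
      by (rule sum_bnd | rule scal_num | rule prod_bnd | rule b)+
    moreover have "U * U * U = U^3" by (simp add: power3_eq_cube)
    ultimately show ?thesis using mk[of 1] mk[of 2] mk[of 3] G0 i3 by (simp add: power2_eq_square)
  next
    assume i4: "i = 4"
    have "\<bar>qpoly u i x\<bar> \<le> U + 4 * (U * U) + 3 * (U * U) + 6 * (U * U * U) + U * U * U * U"
      unfolding i4 qpoly_num
      by (rule sum_bnd | rule scal_num | rule prod_bnd | rule b)+
    moreover have "U * U * U = U^3" "U * U * U * U = U^4" by (simp_all add: power3_eq_cube power4_eq_xxxx)
    ultimately show ?thesis using mk[of 1] mk[of 2] mk[of 3] mk[of 4] G0 i4 by (simp add: power2_eq_square)
  qed
  then show ?thesis unfolding G_def .
qed



lemma efam_bound0: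
  assumes M: "\<And>x. \<bar>r * exp (u 0 x)\<bar> \<le> M"
  shows "\<bar>efam r u 0 x\<bar> \<le> M"
  using M[of x] by (simp add: efam_def)

lemma efam_bound:
  fixes lam Lam :: real
  assumes M: "\<And>x. \<bar>r * exp (u 0 x)\<bar> \<le> M"
    and ub: "\<And>i x. 1 \<le> i \<Longrightarrow> i \<le> 4 \<Longrightarrow> \<bar>u i x\<bar> \<le> lam * exp \<bar>x\<bar>"
    and l: "0 \<le> lam" "lam \<le> Lam" and i: "1 \<le> i" "i \<le> 4"
  shows "\<bar>efam r u i x\<bar> \<le> (15 * lam * (1+Lam)^3 * M) * exp (real i * \<bar>x\<bar>)"
proof -
  have "\<bar>efam r u i x\<bar> = \<bar>qpoly u i x\<bar> * \<bar>r * exp (u 0 x)\<bar>"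
    by (simp add: efam_def abs_mult)
  also have "\<dots> \<le> (15 * (lam * (1+Lam)^3 * exp (real i * \<bar>x\<bar>))) * M"
  proof (rule mult_mono[OF qpoly_bound[OF ub l i] M])
    show "0 \<le> 15 * (lam * (1+Lam)^3 * exp (real i * \<bar>x\<bar>))" using l by simp
  qed auto
  finally show ?thesis by (simp add: mult_ac)
qed

lemma tanh_le: "0 \<le> y \<Longrightarrow> tanh (y::real) \<le> 2 * y"
proof -
  assume y: "0 \<le> y"
  have e: "1 - 2*y \<le> exp (-2*y)" using exp_ge_add_one_self[of "-2*y"] by simp
  have "tanh y = (1 - exp (- 2 * y)) / (1 + exp (- 2 * y))" by (rule tanh_real_altdef)
  also have "\<dots> \<le> (1 - exp (- 2 * y)) / 1"
    using y by (intro divide_left_mono) (auto simp: add_pos_pos)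
  also have "\<dots> \<le> 2 * y" using e by simp
  finally show ?thesis .
qed



lemma kernel_exponent:
  fixes C S x u :: real
  assumes S: "S > 0" and C: "C > 0" and CS: "C^2 = S^2 + 1"
  shows "(x^2 + (x/C + sqrt (S/C) * u)^2) * C / S - 2 * x * (x/C + sqrt (S/C) * u) / S = (S/C) * x^2 + u^2"
proof -
  have q2: "sqrt (S/C) ^ 2 = S/C" using S C by simp
  define q where "q = sqrt (S/C)"
  have q2': "q * q = S/C" using q2 unfolding q_def by (simp add: power2_eq_square)
  have "(x^2 + (x/C + q * u)^2) * C / S - 2 * x * (x/C + q * u) / S
      = (x^2 * C + x^2/C + 2*x*q*u + C*(q*q)*u^2 - 2*x^2/C - 2*x*q*u) / S"
    using S C by (simp add: power2_eq_square field_simps)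
  also have "\<dots> = (x^2 * (C - 1/C) + S*u^2) / S" using C S unfolding q2' by (simp add: field_simps)
  also have "C - 1/C = S^2 / C" using C CS by (simp add: field_simps power2_eq_square)
  also have "(x^2 * (S^2 / C) + S*u^2) / S = (S/C) * x^2 + u^2" using S C by (simp add: field_simps power2_eq_square)
  finally show ?thesis unfolding q_def .
qed

lemma kernel_identity:
  fixes s x u :: real
  assumes s: "s > 0"
  shows "sqrt (tanh (2* s)) * Ukernel s x (x / cosh (2* s) + sqrt (tanh (2* s)) * u)
       = cosh (2* s) powr (-1/2) * exp (-(tanh (2* s) * x^2 / 2)) * std_normal_density u"
proof -
  define C where "C = cosh (2* s)"
  define S where "S = sinh (2* s)"
  have S: "S > 0" unfolding S_def using s by simp
  have C: "C > 0" unfolding C_def by (simp add: cosh_real_pos)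
  have CS: "C^2 = S^2 + 1" unfolding C_def S_def by (rule cosh_square_eq)
  have t: "tanh (2* s) = S/C" unfolding S_def C_def by (simp add: tanh_def)
  have pw: "y powr (-1/2) = 1 / sqrt y" if "y > 0" for y :: real
  proof -
    have m: "(-1/2::real) = -(1/2)" by simp
    show ?thesis unfolding m powr_minus_divide powr_half_sqrt[OF less_imp_le[OF that]] ..
  qed
  have e: "exp (-(1/2) * ((x^2 + (x/C + sqrt (S/C) * u)^2) * C / S - 2 * x * (x/C + sqrt (S/C) * u) / S))
      = exp (-((S/C) * x^2 / 2)) * exp (- (u^2) / 2)"
    unfolding kernel_exponent[OF S C CS] mult_exp_exp by (simp add: field_simps)
  have pre: "sqrt (S/C) * (1 / sqrt (2 * pi * S)) = (1 / sqrt C) * (1 / sqrt (2*pi))"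
    using S C by (simp add: real_sqrt_divide real_sqrt_mult field_simps)
  have "sqrt (S/C) * Ukernel s x (x / C + sqrt (S/C) * u)
     = (sqrt (S/C) * (1 / sqrt (2 * pi * S))) * exp (-(1/2) * ((x^2 + (x/C + sqrt (S/C) * u)^2) * C / S - 2 * x * (x/C + sqrt (S/C) * u) / S))"
  proof -
    have p2: "2*pi*S > 0" using S by simp
    show ?thesis unfolding Ukernel_def C_def[symmetric] S_def[symmetric] pw[OF p2] t by (simp only: mult.assoc)
  qed
  also have "\<dots> = (1 / sqrt C) * exp (-((S/C) * x^2 / 2)) * ((1 / sqrt (2*pi)) * exp (- (u^2) / 2))"
    unfolding pre e by (simp add: mult_ac)
  also have "\<dots> = C powr (-1/2) * exp (-((S/C) * x^2 / 2)) * std_normal_density u"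
    unfolding pw[OF C] std_normal_density_def by (simp only: mult_ac)
  finally show ?thesis unfolding t C_def[symmetric] .
qed

lemma Uop_repr:
  fixes s :: real
  assumes s: "s > 0"
  shows "Uop s f x = cosh (2* s) powr (-1/2) * exp (-(tanh (2* s) * x^2 / 2)) *
           (\<integral>u. std_normal_density u * f (x / cosh (2* s) + sqrt (tanh (2* s)) * u) \<partial>lborel)"
proof -
  define q where "q = sqrt (tanh (2* s))"
  define p where "p = 1 / cosh (2* s)"
  have q: "q > 0" unfolding q_def using s by simp
  have "Uop s f x = (\<integral>z. Ukernel s x z * f z \<partial>lborel)" using s by (simp add: Uop_def)
  also have "\<dots> = \<bar>q\<bar> *\<^sub>R (\<integral>u. Ukernel s x (p*x + q*u) * f (p*x + q*u) \<partial>lborel)"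
    using q by (intro lborel_integral_real_affine) simp
  also have "\<dots> = (\<integral>u. (q * Ukernel s x (p*x + q*u)) * f (p*x + q*u) \<partial>lborel)"
    using q by (simp add: mult_ac)
  also have "\<dots> = (\<integral>u. (cosh (2* s) powr (-1/2) * exp (-(tanh (2* s) * x^2 / 2))) * (std_normal_density u * f (x / cosh (2* s) + q*u)) \<partial>lborel)"
    using kernel_identity[OF s, of x] unfolding q_def[symmetric] p_def
    by (simp add: mult_ac)
  also have "\<dots> = cosh (2* s) powr (-1/2) * exp (-(tanh (2* s) * x^2 / 2)) *
           (\<integral>u. std_normal_density u * f (x / cosh (2* s) + q * u) \<partial>lborel)"
    by simp
  finally show ?thesis unfolding q_def .
qed



lemma F4_meas:
  assumes [measurable]: "h \<in> borel_measurable borel"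
  shows "(\<lambda>x. c * (\<integral>u. \<phi> u * h (p*x + q*u) \<partial>lborel)) \<in> borel_measurable borel"
  by measurable

definition Au :: "real \<Rightarrow> nat \<Rightarrow> real \<Rightarrow> real" where
  "Au a j x = (if j = 0 then -(a*x^2/2) else if j = 1 then -(a*x) else if j = 2 then -a else 0)"

lemma dfam_Au: "dfam (Au a)"
proof -
  have e0: "Au a 0 = (\<lambda>x. -(a*x^2/2))" and e1: "Au a (Suc 0) = (\<lambda>x. -(a*x))"
    and e2: "Au a (Suc (Suc 0)) = (\<lambda>x. -a)" and e3: "Au a (Suc (Suc (Suc 0))) = (\<lambda>x. 0)"
    and e4: "Au a (Suc (Suc (Suc (Suc 0)))) = (\<lambda>x. 0)"
    by (auto simp: Au_def[abs_def])
  show ?thesis unfolding dfam_def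
  proof (intro allI impI)
    fix j :: nat and x :: real
    assume "j < 4"
    then have "j = 0 \<or> j = Suc 0 \<or> j = Suc (Suc 0) \<or> j = Suc (Suc (Suc 0))" by auto
    then show "(Au a j has_real_derivative Au a (Suc j) x) (at x)"
      by (elim disjE) (simp_all only: e0 e1 e2 e3 e4, auto intro!: derivative_eq_intros)
  qed
qed

lemma abs_le_exp_abs: "\<bar>x::real\<bar> \<le> exp \<bar>x\<bar>"
  using exp_ge_add_one_self[of "\<bar>x\<bar>"] by linarith

lemma Au_bound: assumes "0 \<le> a" "1 \<le> i" shows "\<bar>Au a i x\<bar> \<le> a * exp \<bar>x\<bar>"
proof -
  have "a * \<bar>x\<bar> \<le> a * exp \<bar>x\<bar>" using abs_le_exp_abs[of x] assms by (intro mult_left_mono) auto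
  moreover have "a * 1 \<le> a * exp \<bar>x\<bar>" using assms by (intro mult_left_mono) auto
  ultimately show ?thesis using assms by (auto simp: Au_def abs_mult)
qed

lemma Ustep:
  assumes g: "good B D" and s: "s \<ge> 0"
  shows "\<exists>D'. good (exp (3848 * tanh (2* s)) * B) D' \<and> D' 0 = Uop s (D 0)"
proof (cases "s = 0")
  case True
  then show ?thesis using g by (intro exI[of _ D]) (auto simp: Uop_def[abs_def])
next
  case False
  then have s: "s > 0" using s by simp
  define C where "C = cosh (2* s)"
  define a where "a = tanh (2* s)"
  define p where "p = 1 / C"
  define q where "q = sqrt a"
  define r where "r = C powr (-1/2)"
  have C1: "C \<ge> 1" unfolding C_def by (rule cosh_real_ge_1)
  have a0: "a > 0" unfolding a_def using s by simp
  have a1: "a \<le> 1" unfolding a_def using tanh_real_lt_1[of "2* s"] by simp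
  have p0: "0 < p" "p \<le> 1" unfolding p_def using C1 by auto
  have r01: "0 \<le> r" "r \<le> 1"
  proof -
    have m: "(-1/2::real) = -(1/2)" by simp
    have "r = 1 / sqrt C" unfolding r_def m powr_minus_divide using C1 by (simp add: powr_half_sqrt)
    then show "0 \<le> r" "r \<le> 1" using C1 by auto
  qed
  have gD: "dfam D" "D 4 \<in> borel_measurable borel" "\<And>j x. j \<le> 4 \<Longrightarrow> \<bar>D j x\<bar> \<le> B * cosh (real j * x)"
    using g unfolding good_def by auto
  have B0: "0 \<le> B" using gD(3)[of 0 0] by simp
  define F where "F = (\<lambda>j x. p^j * (\<integral>u. \<phi> u * D j (p*x + q*u) \<partial>lborel))"
  have Dm: "D j \<in> borel_measurable borel" if "j \<le> 4" for j using dfam_meas[OF gD(1,2) that] .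
  have dF: "dfam F" unfolding dfam_def
  proof (intro allI impI)
    fix j :: nat and x :: real assume j: "j < 4"
    have "((\<lambda>x. \<integral>u. \<phi> u * D j (p*x + q*u) \<partial>lborel) has_real_derivative
           p * (\<integral>u. \<phi> u * D (Suc j) (p*x + q*u) \<partial>lborel)) (at x)"
      by (rule diff_int[where B=B and K="real (Suc j)" and B0=B and K0="real j"])
         (use dfam_D[OF gD(1) j] Dm[of "Suc j"] gD(3)[of "Suc j"] gD(3)[of j] j in auto)
    then have "((\<lambda>x. p^j * (\<integral>u. \<phi> u * D j (p*x + q*u) \<partial>lborel)) has_real_derivative
           p^j * (p * (\<integral>u. \<phi> u * D (Suc j) (p*x + q*u) \<partial>lborel))) (at x)"
      by (rule DERIV_cmult)
    then show "(F j has_real_derivative F (Suc j) x) (at x)" unfolding F_def by (simp add: mult_ac)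
  qed
  have F4m: "F 4 \<in> borel_measurable borel" unfolding F_def using Dm[of 4]
    by (intro F4_meas) auto
  have Fb: "\<bar>F j x\<bar> \<le> (B * exp (8*a)) * cosh (real j * x)" if j: "j \<le> 4" for j x
  proof -
    have "\<bar>\<integral>u. \<phi> u * D j (p*x + q*u) \<partial>lborel\<bar> \<le> B * (cosh (real j * (p*x)) * exp ((real j * q)^2/2))"
      by (rule integral_phi_bound[OF Dm[OF j] gD(3)[OF j]])
    also have "\<dots> \<le> B * (cosh (real j * x) * exp (8*a))"
    proof -
      have "cosh (real j * (p*x)) \<le> cosh (real j * x)"
      proof (rule cosh_mono_abs)
        have "p * \<bar>x\<bar> \<le> \<bar>x\<bar>" using p0 by (intro mult_left_le_one_le) auto
        then show "\<bar>real j * (p*x)\<bar> \<le> \<bar>real j * x\<bar>" using p0 by (auto simp: abs_mult intro!: mult_left_mono)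
      qed
      moreover have "(real j * q)^2/2 \<le> 8*a"
      proof -
        have "(real j * q)^2 = real j^2 * a" unfolding q_def using a0 by (simp add: power_mult_distrib)
        also have "\<dots> \<le> 16 * a"
        proof -
          have "real j^2 \<le> 4^2" using j by (intro power_mono) auto
          then show ?thesis using a0 by (intro mult_right_mono) auto
        qed
        finally show ?thesis by simp
      qed
      ultimately show ?thesis using B0 by (intro mult_left_mono mult_mono) auto
    qed
    finally have i: "\<bar>\<integral>u. \<phi> u * D j (p*x + q*u) \<partial>lborel\<bar> \<le> B * (cosh (real j * x) * exp (8*a))" .
    have "\<bar>F j x\<bar> = p^j * \<bar>\<integral>u. \<phi> u * D j (p*x + q*u) \<partial>lborel\<bar>" unfolding F_def using p0 by (simp add: abs_mult)
    also have "\<dots> \<le> 1 * (B * (cosh (real j * x) * exp (8*a)))"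
      using p0 i by (intro mult_mono) (auto simp: power_le_one)
    finally show ?thesis by (simp add: mult_ac)
  qed
  define A where "A = efam r (Au a)"
  have dA: "dfam A" unfolding A_def by (rule dfam_efam[OF dfam_Au])
  have A4m: "A 4 \<in> borel_measurable borel"
    unfolding A_def efam_def[abs_def] qpoly_num Au_def by measurable
  have Ab0: "\<bar>A 0 x\<bar> \<le> 1" for x unfolding A_def
  proof (rule efam_bound0)
    fix x
    have "r * exp (Au a 0 x) \<le> 1 * 1"
      using r01 a0 by (intro mult_mono) (auto simp: Au_def)
    then show "\<bar>r * exp (Au a 0 x)\<bar> \<le> 1" using r01 by simp
  qed
  have Abi: "\<bar>A i x\<bar> \<le> (15 * a * (1+1)^3 * 1) * exp (real i * \<bar>x\<bar>)" if "1 \<le> i" "i \<le> 4" for i x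
    unfolding A_def
  proof (rule efam_bound[OF _ _ _ _ that])
    fix x
    have "r * exp (Au a 0 x) \<le> 1 * 1"
      using r01 a0 by (intro mult_mono) (auto simp: Au_def)
    then show "\<bar>r * exp (Au a 0 x)\<bar> \<le> 1" using r01 by simp
  next
    fix i x assume "1 \<le> i" "i \<le> (4::nat)"
    then show "\<bar>Au a i x\<bar> \<le> a * exp \<bar>x\<bar>" using Au_bound a0 by auto
  qed (use a0 a1 in auto)
  define D' where "D' = leib A F"
  have gD': "good (exp (3848 * a) * B) D'"
    unfolding good_def
  proof (intro conjI allI impI)
    show "dfam D'" unfolding D'_def by (rule dfam_leib[OF dA dF])
    show "D' 4 \<in> borel_measurable borel" unfolding D'_def by (rule leib_meas[OF dA dF A4m F4m])
    fix j :: nat and x :: real assume j: "j \<le> 4"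
    have "\<bar>D' j x\<bar> \<le> (1 + 32 * (15 * a * (1+1)^3 * 1)) * (B * exp (8*a)) * cosh (real j * x)"
      unfolding D'_def by (rule leib_bound[OF Ab0 Abi Fb j])
    also have "\<dots> \<le> exp (3848 * a) * B * cosh (real j * x)"
    proof -
      have "1 + 32 * (15 * a * (1+1)^3 * 1) = 1 + 3840 * a" by simp
      also have "\<dots> \<le> exp (3840 * a)" using exp_ge_add_one_self[of "3840*a"] by simp
      finally have "(1 + 32 * (15 * a * (1+1)^3 * 1)) * exp (8*a) \<le> exp (3840 * a) * exp (8*a)"
        by (intro mult_right_mono) auto
      also have "\<dots> = exp (3848 * a)" by (simp add: exp_add[symmetric])
      finally show ?thesis using B0 by (simp add: mult_ac mult_right_mono mult_left_mono)
    qed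
    finally show "\<bar>D' j x\<bar> \<le> exp (3848 * a) * B * cosh (real j * x)" .
  qed
  have "D' 0 = Uop s (D 0)"
  proof
    fix x
    have "D' 0 x = r * exp (-(a*x^2/2)) * (\<integral>u. \<phi> u * D 0 (p*x + q*u) \<partial>lborel)"
      unfolding D'_def A_def F_def by (simp add: efam_def Au_def)
    also have "\<dots> = Uop s (D 0) x"
      unfolding Uop_repr[OF s] r_def C_def a_def p_def q_def by (simp add: mult_ac)
    finally show "D' 0 x = Uop s (D 0) x" .
  qed
  then show ?thesis using gD' unfolding a_def by blast
qed



lemma Estep:
  assumes g: "good B D" and cf: "dfam cf" and cf4: "cf 4 \<in> borel_measurable borel"
    and cb: "\<And>j x. j \<le> 4 \<Longrightarrow> \<bar>cf j x\<bar> \<le> L"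
    and h: "0 \<le> h" "h \<le> H0"
  shows "\<exists>D'. good (exp (h * (2*L + 960*L*(1+2*H0*L)^3)) * B) D' \<and>
               D' 0 = (\<lambda>x. exp (- 2 * cf 0 x * h) * D 0 x)"
proof -
  have L0: "0 \<le> L" using cb[of 0 0] by simp
  have gD: "dfam D" "D 4 \<in> borel_measurable borel" "\<And>j x. j \<le> 4 \<Longrightarrow> \<bar>D j x\<bar> \<le> B * cosh (real j * x)"
    using g unfolding good_def by auto
  have B0: "0 \<le> B" using gD(3)[of 0 0] by simp
  define cu where "cu = (\<lambda>j x. -2*h*cf j x)"
  have dcu: "dfam cu" unfolding dfam_def
  proof (intro allI impI)
    fix j :: nat and x :: real assume "j < 4"
    from DERIV_cmult[OF dfam_D[OF cf this], of "-2*h"]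
    show "(cu j has_real_derivative cu (Suc j) x) (at x)" unfolding cu_def by simp
  qed
  define E where "E = efam 1 cu"
  have dE: "dfam E" unfolding E_def by (rule dfam_efam[OF dcu])
  have E4m: "E 4 \<in> borel_measurable borel"
  proof -
    have [measurable]: "cf j \<in> borel_measurable borel" if "j \<le> 4" for j using dfam_meas[OF cf cf4 that] .
    show ?thesis unfolding E_def efam_def[abs_def] qpoly_num cu_def by measurable
  qed
  define lam where "lam = 2*h*L"
  define Lam where "Lam = 2*H0*L"
  have l: "0 \<le> lam" "lam \<le> Lam" unfolding lam_def Lam_def using h L0 by (auto intro!: mult_right_mono)
  have M: "\<bar>1 * exp (cu 0 x)\<bar> \<le> exp lam" for x
  proof -
    have "-2*h*cf 0 x \<le> 2*h*L"
    proof -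
      have "2*h*(-cf 0 x) \<le> 2*h*L" using cb[of 0 x] h by (intro mult_left_mono) auto
      then show ?thesis by simp
    qed
    then show ?thesis unfolding cu_def lam_def by simp
  qed
  have ub: "\<bar>cu i x\<bar> \<le> lam * exp \<bar>x\<bar>" if "1 \<le> i" "i \<le> 4" for i x
  proof -
    have "\<bar>cu i x\<bar> = 2*h*\<bar>cf i x\<bar>" unfolding cu_def using h by (simp add: abs_mult)
    also have "\<dots> \<le> 2*h*L" using cb[OF that(2)] h by (intro mult_left_mono) auto
    also have "\<dots> \<le> 2*h*L * exp \<bar>x\<bar>"
    proof -
      have "2*h*L * 1 \<le> 2*h*L * exp \<bar>x\<bar>" using h L0 by (intro mult_left_mono) auto
      then show ?thesis by simp
    qed
    finally show ?thesis unfolding lam_def .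
  qed
  have Eb0: "\<bar>E 0 x\<bar> \<le> exp lam" for x unfolding E_def by (rule efam_bound0[where r=1 and u=cu, OF M])
  have Ebi: "\<bar>E i x\<bar> \<le> (15 * lam * (1+Lam)^3 * exp lam) * exp (real i * \<bar>x\<bar>)" if "1 \<le> i" "i \<le> 4" for i x
    unfolding E_def by (rule efam_bound[where r=1 and u=cu, OF M ub l that])
  define D' where "D' = leib E D"
  have gD': "good (exp (h * (2*L + 960*L*(1+2*H0*L)^3)) * B) D'"
    unfolding good_def
  proof (intro conjI allI impI)
    show "dfam D'" unfolding D'_def by (rule dfam_leib[OF dE gD(1)])
    show "D' 4 \<in> borel_measurable borel" unfolding D'_def by (rule leib_meas[OF dE gD(1) E4m gD(2)])
    fix j :: nat and x :: real assume j: "j \<le> 4"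
    have "\<bar>D' j x\<bar> \<le> (exp lam + 32 * (15 * lam * (1+Lam)^3 * exp lam)) * B * cosh (real j * x)"
      unfolding D'_def by (rule leib_bound[OF Eb0 Ebi gD(3) j])
    also have "\<dots> \<le> exp (h * (2*L + 960*L*(1+2*H0*L)^3)) * B * cosh (real j * x)"
    proof -
      have "exp lam + 32 * (15 * lam * (1+Lam)^3 * exp lam) = exp lam * (1 + 480 * lam * (1+Lam)^3)"
        by (simp add: algebra_simps)
      also have "\<dots> \<le> exp lam * exp (480 * lam * (1+Lam)^3)"
        using exp_ge_add_one_self[of "480 * lam * (1+Lam)^3"] by (intro mult_left_mono) auto
      also have "\<dots> = exp (h * (2*L + 960*L*(1+2*H0*L)^3))"
        unfolding lam_def Lam_def by (simp add: exp_add[symmetric] algebra_simps)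
      finally show ?thesis using B0 by (intro mult_right_mono) auto
    qed
    finally show "\<bar>D' j x\<bar> \<le> exp (h * (2*L + 960*L*(1+2*H0*L)^3)) * B * cosh (real j * x)" .
  qed
  have "D' 0 = (\<lambda>x. exp (- 2 * cf 0 x * h) * D 0 x)"
    unfolding D'_def E_def by (auto simp: efam_def cu_def mult_ac)
  then show ?thesis using gD' by blast
qed



lemma good_mono: assumes "good B D" "B \<le> B'" shows "good B' D"
  unfolding good_def
proof (intro conjI allI impI)
  show "dfam D" "D 4 \<in> borel_measurable borel" using assms(1) unfolding good_def by auto
  fix j :: nat and x :: real assume "j \<le> 4"
  then have "\<bar>D j x\<bar> \<le> B * cosh (real j * x)" using assms(1) unfolding good_def by auto
  also have "\<dots> \<le> B' * cosh (real j * x)" using assms(2) cosh_real_pos[of "real j * x"]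
    by (intro mult_right_mono) auto
  finally show "\<bar>D j x\<bar> \<le> B' * cosh (real j * x)" .
qed

lemma good_B0: "good B D \<Longrightarrow> 0 \<le> B"
proof -
  assume "good B D"
  then have "\<bar>D 0 0\<bar> \<le> B * cosh (real 0 * 0)" unfolding good_def by blast
  then show "0 \<le> B" by simp
qed

lemma gdiff: "n \<ge> 1 \<Longrightarrow> gtau t n (Suc m) - gtau t n m = t / (2 * real n)"
  unfolding gtau_def by (simp add: field_simps)

lemma node_good:
  fixes t L :: real
  assumes g0: "good B0 D0" and D00: "D0 0 = v0"
    and cfam: "\<And>\<sigma>. \<sigma> > 0 \<Longrightarrow> dfam (cf \<sigma>) \<and> cf \<sigma> 4 \<in> borel_measurable borel \<and>
                     (\<forall>j x. j \<le> 4 \<longrightarrow> \<bar>cf \<sigma> j x\<bar> \<le> L) \<and> cf \<sigma> 0 = c \<sigma>"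
    and t: "t > 0" and n: "n \<ge> 1" and L: "0 \<le> L"
  shows "k \<le> n \<Longrightarrow> \<exists>D. good (B0 * exp (real k * (15392*t + t*(2*L + 960*L*(1+2*t*L)^3)/2) / real n)) D
                \<and> D 0 = node t n c v0 k"
proof (induction k)
  case 0 then show ?case using g0 D00 by (intro exI[of _ D0]) simp
next
  case (Suc k)
  define KE where "KE = 2*L + 960*L*(1+2*t*L)^3"
  define Kst where "Kst = 15392*t + t*KE/2"
  have KE0: "0 \<le> KE" unfolding KE_def using L t by simp
  from Suc obtain D where D: "good (B0 * exp (real k * Kst / real n)) D" "D 0 = node t n c v0 k"
    unfolding KE_def Kst_def by auto
  define s where "s = 2 * (gtau t n (2*k+1) - gtau t n (2*k))"
  have s: "s = t / real n" unfolding s_def using gdiff[OF n, of t "2*k"] n by simp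
  have s0: "0 \<le> s" unfolding s using t by simp
  obtain D1 where D1: "good (exp (3848 * tanh (2 * s)) * (B0 * exp (real k * Kst / real n))) D1"
      "D1 0 = Uop s (node t n c v0 k)"
    using Ustep[OF D(1) s0] D(2) by auto
  define \<sigma> where "\<sigma> = gtau t n (2*k+2)"
  have \<sigma>: "\<sigma> > 0" unfolding \<sigma>_def gtau_def using t n by simp
  define h where "h = gtau t n (2*k+2) - gtau t n (2*k+1)"
  have h: "h = t / (2 * real n)" unfolding h_def using gdiff[OF n, of t "2*k+1"] by simp
  have h0: "0 \<le> h" "h \<le> t" unfolding h using t n by (auto simp: field_simps)
  have cf: "dfam (cf \<sigma>)" "cf \<sigma> 4 \<in> borel_measurable borel" "\<And>j x. j \<le> 4 \<Longrightarrow> \<bar>cf \<sigma> j x\<bar> \<le> L" "cf \<sigma> 0 = c \<sigma>"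
    using cfam[OF \<sigma>] by auto
  obtain D2 where D2: "good (exp (h * KE) * (exp (3848 * tanh (2 * s)) * (B0 * exp (real k * Kst / real n)))) D2"
     "D2 0 = (\<lambda>x. exp (- 2 * cf \<sigma> 0 x * h) * D1 0 x)"
    using Estep[OF D1(1) cf(1,2,3) h0] unfolding KE_def by blast
  have "D2 0 = node t n c v0 (Suc k)"
    unfolding D2(2) D1(1) cf(4) by (simp add: D1(2) s_def h_def \<sigma>_def)
  moreover have "exp (h * KE) * (exp (3848 * tanh (2 * s)) * (B0 * exp (real k * Kst / real n)))
      \<le> B0 * exp (real (Suc k) * Kst / real n)"
  proof -
    have B0: "0 \<le> B0" by (rule good_B0[OF g0])
    have "tanh (2 * s) \<le> 2 * (2 * s)" using s0 by (intro tanh_le) simp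
    then have "h * KE + 3848 * tanh (2 * s) + real k * Kst / real n \<le> Kst / real n + real k * Kst / real n"
      unfolding Kst_def h s using t n KE0 by (simp add: field_simps)
    also have "\<dots> = real (Suc k) * Kst / real n" by (simp add: add_divide_distrib[symmetric] distrib_right)
    finally have "exp (h * KE + 3848 * tanh (2 * s) + real k * Kst / real n) \<le> exp (real (Suc k) * Kst / real n)"
      by simp
    then show ?thesis using B0 by (simp add: exp_add[symmetric] mult_ac mult_left_mono)
  qed
  ultimately show ?case using good_mono[OF D2(1)] unfolding KE_def Kst_def by blast
qed



theorem lemma3:
  fixes v0 :: "real \<Rightarrow> real" and c :: "real \<Rightarrow> real \<Rightarrow> real" and t :: real
  assumes v0_diff: "\<And>j x. j < 4 \<Longrightarrow> ((deriv ^^ j) v0) differentiable (at x)"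
    and v0_cont: "\<And>j. j \<le> 4 \<Longrightarrow> continuous_on UNIV ((deriv ^^ j) v0)"
    and v0_bdd: "\<And>j. j \<le> 4 \<Longrightarrow> bounded (range ((deriv ^^ j) v0))"
    and v0_lim: "(v0 \<longlongrightarrow> 0) at_infinity"
    and c_cont: "continuous_on ({0..} \<times> UNIV) (\<lambda>(s, y). c s y)"
    and c_bdd: "bounded ((\<lambda>(s, y). c s y) ` ({0..} \<times> UNIV))"
    and c_C1: "\<exists>D. (\<forall>p \<in> {0<..} \<times> UNIV. ((\<lambda>(s, y). c s y) has_derivative D p) (at p))
                 \<and> continuous_on ({0<..} \<times> UNIV) (\<lambda>p. D p (1, 0))
                 \<and> continuous_on ({0<..} \<times> UNIV) (\<lambda>p. D p (0, 1))"
    and c_xdiff: "\<And>j s y. j < 4 \<Longrightarrow> s > 0 \<Longrightarrow> ((deriv ^^ j) (c s)) differentiable (at y)"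
    and c_xcont: "\<And>j. j \<le> 4 \<Longrightarrow>
                   continuous_on ({0<..} \<times> UNIV) (\<lambda>(s, y). (deriv ^^ j) (c s) y)"
    and c_xbdd: "\<And>j. j \<le> 4 \<Longrightarrow>
                   bounded ((\<lambda>(s, y). (deriv ^^ j) (c s) y) ` ({0<..} \<times> UNIV))"
    and t_pos: "t > 0"
  shows "\<forall>x. \<exists>C > 0. \<forall>j \<le> 4. \<forall>n \<ge> 1. \<forall>k < n.
           \<forall>\<tau> \<in> {real k * t / real n .. real (Suc k) * t / real n}.
             \<bar>(deriv ^^ j) (vn t n c v0 \<tau>) x\<bar> \<le> C"
proof -
  have "\<forall>j. \<exists>b. j \<le> 4 \<longrightarrow> (\<forall>x. \<bar>(deriv ^^ j) v0 x\<bar> \<le> b)"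
  proof
    fix j show "\<exists>b. j \<le> 4 \<longrightarrow> (\<forall>x. \<bar>(deriv ^^ j) v0 x\<bar> \<le> b)"
    proof (cases "j \<le> 4")
      case True
      then obtain b where "\<forall>y\<in>range ((deriv ^^ j) v0). norm y \<le> b" using v0_bdd[OF True] unfolding bounded_iff by blast
      then show ?thesis by auto
    qed auto
  qed
  then obtain bv where bv: "\<And>j x. j \<le> 4 \<Longrightarrow> \<bar>(deriv ^^ j) v0 x\<bar> \<le> bv j" by metis
  define B0 where "B0 = (\<Sum>j\<le>4. \<bar>bv j\<bar>)"
  define D0 where "D0 = (\<lambda>j. (deriv ^^ j) v0)"
  have B00: "0 \<le> B0" unfolding B0_def by (simp add: sum_nonneg)
  have gv0: "good B0 D0" unfolding good_def
  proof (intro conjI allI impI)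
    show "dfam D0" unfolding dfam_def D0_def
    proof (intro allI impI)
      fix j :: nat and x :: real assume "j < 4"
      then show "((deriv ^^ j) v0 has_real_derivative (deriv ^^ Suc j) v0 x) (at x)"
        using v0_diff[of j x] by (simp add: DERIV_deriv_iff_real_differentiable)
    qed
    show "D0 4 \<in> borel_measurable borel" unfolding D0_def
      by (rule borel_measurable_continuous_onI[OF v0_cont]) simp
    fix j :: nat and x :: real assume j: "j \<le> 4"
    have "\<bar>D0 j x\<bar> \<le> \<bar>bv j\<bar>" unfolding D0_def using bv[OF j, of x] by linarith
    also have "\<dots> \<le> B0" unfolding B0_def by (rule member_le_sum) (use j in auto)
    also have "\<dots> \<le> B0 * cosh (real j * x)" using B00 cosh_real_ge_1[of "real j * x"]
      by (metis mult.right_neutral mult_left_mono)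
    finally show "\<bar>D0 j x\<bar> \<le> B0 * cosh (real j * x)" .
  qed
  have D00: "D0 0 = v0" unfolding D0_def by simp
  have "\<forall>j. \<exists>b. j \<le> 4 \<longrightarrow> (\<forall>s y. s > 0 \<longrightarrow> \<bar>(deriv ^^ j) (c s) y\<bar> \<le> b)"
  proof
    fix j show "\<exists>b. j \<le> 4 \<longrightarrow> (\<forall>s y. s > 0 \<longrightarrow> \<bar>(deriv ^^ j) (c s) y\<bar> \<le> b)"
    proof (cases "j \<le> 4")
      case True
      then obtain b where b: "\<forall>z\<in>(\<lambda>(s, y). (deriv ^^ j) (c s) y) ` ({0<..} \<times> UNIV). norm z \<le> b"
        using c_xbdd[OF True] unfolding bounded_iff by blast
      have "\<bar>(deriv ^^ j) (c s) y\<bar> \<le> b" if "s > 0" for s y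
        using b[rule_format, of "(deriv ^^ j) (c s) y"] that by force
      then show ?thesis by auto
    qed auto
  qed
  then obtain bc where bc: "\<And>j s y. j \<le> 4 \<Longrightarrow> s > 0 \<Longrightarrow> \<bar>(deriv ^^ j) (c s) y\<bar> \<le> bc j" by metis
  define L where "L = (\<Sum>j\<le>4. \<bar>bc j\<bar>)"
  have L0: "0 \<le> L" unfolding L_def by (simp add: sum_nonneg)
  define cf where "cf = (\<lambda>\<sigma> j. (deriv ^^ j) (c \<sigma>))"
  have cfam: "dfam (cf \<sigma>) \<and> cf \<sigma> 4 \<in> borel_measurable borel \<and>
                     (\<forall>j x. j \<le> 4 \<longrightarrow> \<bar>cf \<sigma> j x\<bar> \<le> L) \<and> cf \<sigma> 0 = c \<sigma>" if \<sigma>: "\<sigma> > 0" for \<sigma>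
  proof (intro conjI allI impI)
    show "dfam (cf \<sigma>)" unfolding dfam_def cf_def
    proof (intro allI impI)
      fix j :: nat and x :: real assume "j < 4"
      then show "((deriv ^^ j) (c \<sigma>) has_real_derivative (deriv ^^ Suc j) (c \<sigma>) x) (at x)"
        using c_xdiff[of j \<sigma> x] \<sigma> by (simp add: DERIV_deriv_iff_real_differentiable)
    qed
    have "continuous_on UNIV (\<lambda>y. (\<lambda>(s, y). (deriv ^^ 4) (c s) y) (\<sigma>, y))"
      by (rule continuous_on_compose2[OF c_xcont[of 4]]) (use \<sigma> in \<open>auto intro!: continuous_intros\<close>)
    then show "cf \<sigma> 4 \<in> borel_measurable borel" unfolding cf_def
      by (intro borel_measurable_continuous_onI) simp
    fix j :: nat and x :: real assume j: "j \<le> 4"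
    have "\<bar>cf \<sigma> j x\<bar> \<le> \<bar>bc j\<bar>" unfolding cf_def using bc[OF j \<sigma>, of x] by linarith
    also have "\<dots> \<le> L" unfolding L_def by (rule member_le_sum) (use j in auto)
    finally show "\<bar>cf \<sigma> j x\<bar> \<le> L" .
  qed (simp add: cf_def)
  define KE where "KE = 2*L + 960*L*(1+2*t*L)^3"
  define Kst where "Kst = 15392*t + t*KE/2"
  have KE0: "0 \<le> KE" unfolding KE_def using L0 t_pos by simp
  have Kst0: "0 \<le> Kst" unfolding Kst_def using KE0 t_pos by simp
  define Bfin where "Bfin = B0 * exp Kst * exp 3848 * exp (t * KE)"
  have Bfin0: "0 \<le> Bfin" unfolding Bfin_def using B00 by simp
  show ?thesis
  proof (intro allI exI[of _ "Bfin * cosh (4 * x) + 1" for x] conjI impI ballI)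
    fix x :: real
    show "0 < Bfin * cosh (4 * x) + 1" using Bfin0 cosh_real_pos[of "4*x"]
      by (metis add_pos_nonneg mult_nonneg_nonneg less_imp_le zero_less_one add.commute)
    fix j n k :: nat and \<tau> :: real
    assume j: "j \<le> 4" and n: "n \<ge> 1" and k: "k < n"
      and \<tau>: "\<tau> \<in> {real k * t / real n .. real (Suc k) * t / real n}"
    define m where "m = min (2*n - 1) (nat \<lfloor>\<tau> / (t / (2 * real n))\<rfloor>)"
    define kk where "kk = m div 2"
    have \<tau>0: "0 \<le> \<tau>" using \<tau> t_pos by (auto intro: order_trans[rotated])
    have \<tau>t: "\<tau> \<le> t"
    proof -
      have "real (Suc k) * t / real n \<le> real n * t / real n" using k t_pos
        by (intro divide_right_mono mult_right_mono) auto
      then show ?thesis using \<tau> n by auto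
    qed
    have gm: "gtau t n m \<le> \<tau>"
    proof -
      define y where "y = \<tau> / (t / (2 * real n))"
      have y0: "0 \<le> y" unfolding y_def using \<tau>0 t_pos by simp
      have "real m \<le> real (nat \<lfloor>y\<rfloor>)" unfolding m_def y_def by simp
      also have "\<dots> \<le> y" using y0 by simp
      finally have "real m * (t / (2 * real n)) \<le> y * (t / (2 * real n))"
        using t_pos by (intro mult_right_mono) auto
      also have "\<dots> = \<tau>" unfolding y_def using t_pos n by simp
      finally show ?thesis unfolding gtau_def by simp
    qed
    have kkn: "kk \<le> n" unfolding kk_def m_def by auto
    have "\<exists>D. good (B0 * exp (real kk * Kst / real n)) D \<and> D 0 = node t n c v0 kk"
      using node_good[OF gv0 D00 cfam t_pos n L0 kkn] by (simp only: Kst_def KE_def)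
    then obtain Dn where Dn: "good (B0 * exp (real kk * Kst / real n)) Dn" "Dn 0 = node t n c v0 kk"
      by blast
    have Dn': "good (B0 * exp Kst) Dn"
    proof (rule good_mono[OF Dn(1)])
      have "real kk * Kst \<le> real n * Kst" using kkn Kst0 by (intro mult_right_mono) auto
      then have "real kk * Kst / real n \<le> Kst" using n by (simp add: divide_le_eq mult.commute)
      then show "B0 * exp (real kk * Kst / real n) \<le> B0 * exp Kst" using B00 by (simp add: mult_left_mono)
    qed
    have vn_eq: "vn t n c v0 \<tau> = (if even m then (\<lambda>x. Uop (2 * (\<tau> - gtau t n (2*kk))) (node t n c v0 kk) x)
        else (\<lambda>x. exp (- 2 * c (gtau t n (2*kk+2)) x * (\<tau> - gtau t n (2*kk+1))) *
          Uop (2 * (gtau t n (2*kk+1) - gtau t n (2*kk))) (node t n c v0 kk) x))"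
      by (auto simp: vn_def[abs_def] Let_def m_def kk_def intro!: ext)
    have "\<exists>D. good Bfin D \<and> D 0 = vn t n c v0 \<tau>"
    proof (cases "even m")
      case True
      then have m2: "2 * kk = m" unfolding kk_def by simp
      have s0: "0 \<le> 2 * (\<tau> - gtau t n (2*kk))" using gm m2 by simp
      obtain D1 where D1: "good (exp (3848 * tanh (2 * (2 * (\<tau> - gtau t n (2*kk))))) * (B0 * exp Kst)) D1"
        "D1 0 = Uop (2 * (\<tau> - gtau t n (2*kk))) (Dn 0)"
        using Ustep[OF Dn' s0] by blast
      have "good Bfin D1"
      proof (rule good_mono[OF D1(1)])
        have "exp (3848 * tanh (2 * (2 * (\<tau> - gtau t n (2*kk))))) \<le> exp 3848"
          using tanh_real_lt_1[of "2 * (2 * (\<tau> - gtau t n (2*kk)))"] by simp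
        moreover have "1 \<le> exp (t * KE)" using t_pos KE0 by simp
        ultimately show "exp (3848 * tanh (2 * (2 * (\<tau> - gtau t n (2*kk))))) * (B0 * exp Kst) \<le> Bfin"
          unfolding Bfin_def using B00
          by (smt (verit, best) exp_gt_zero mult_le_cancel_right1 mult_nonneg_nonneg mult_right_mono mult.commute mult.left_commute)
      qed
      then show ?thesis using D1(2) Dn(2) True unfolding vn_eq by auto
    next
      case False
      then have m2: "2 * kk + 1 = m" unfolding kk_def by presburger
      define s where "s = 2 * (gtau t n (2*kk+1) - gtau t n (2*kk))"
      have s0: "0 \<le> s" unfolding s_def gtau_def using t_pos n by (simp add: field_simps)
      obtain D1 where D1: "good (exp (3848 * tanh (2 * s)) * (B0 * exp Kst)) D1"
        "D1 0 = Uop s (Dn 0)"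
        using Ustep[OF Dn' s0] by blast
      define \<sigma> where "\<sigma> = gtau t n (2*kk+2)"
      have \<sigma>: "\<sigma> > 0" unfolding \<sigma>_def gtau_def using t_pos n by simp
      define h where "h = \<tau> - gtau t n (2*kk+1)"
      have g1: "0 \<le> gtau t n (2*kk+1)" unfolding gtau_def using t_pos by simp
      have g2: "gtau t n (2*kk+1) \<le> \<tau>" using gm m2 by simp
      have h0: "0 \<le> h" "h \<le> t" unfolding h_def using g1 g2 \<tau>t by linarith+
      have cf: "dfam (cf \<sigma>)" "cf \<sigma> 4 \<in> borel_measurable borel" "\<And>j x. j \<le> 4 \<Longrightarrow> \<bar>cf \<sigma> j x\<bar> \<le> L" "cf \<sigma> 0 = c \<sigma>"
        using cfam[OF \<sigma>] by auto
      have "\<exists>D'. good (exp (h * (2*L + 960*L*(1+2*t*L)^3)) * (exp (3848 * tanh (2 * s)) * (B0 * exp Kst))) D' \<and>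
               D' 0 = (\<lambda>x. exp (- 2 * cf \<sigma> 0 x * h) * D1 0 x)"
        by (rule Estep[OF D1(1) cf(1,2,3) h0])
      then obtain D2 where D2: "good (exp (h * KE) * (exp (3848 * tanh (2 * s)) * (B0 * exp Kst))) D2"
        "D2 0 = (\<lambda>x. exp (- 2 * cf \<sigma> 0 x * h) * D1 0 x)"
        unfolding KE_def by blast
      have "good Bfin D2"
      proof (rule good_mono[OF D2(1)])
        have a: "exp (3848 * tanh (2 * s)) \<le> exp 3848"
          using tanh_real_lt_1[of "2 * s"] by simp
        have b: "exp (h * KE) \<le> exp (t * KE)" using h0 KE0 by (simp add: mult_right_mono)
        have "exp (3848 * tanh (2 * s)) * (B0 * exp Kst) \<le> exp 3848 * (B0 * exp Kst)"
          using a B00 by (intro mult_right_mono) auto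
        then have "exp (h * KE) * (exp (3848 * tanh (2 * s)) * (B0 * exp Kst)) \<le> exp (t * KE) * (exp 3848 * (B0 * exp Kst))"
          using b B00 less_imp_le[OF tanh_real_lt_1[of "2 * s"]] by (intro mult_mono) auto
        then show "exp (h * KE) * (exp (3848 * tanh (2 * s)) * (B0 * exp Kst)) \<le> Bfin"
          unfolding Bfin_def by (simp add: mult_ac)
      qed
      moreover have "D2 0 = vn t n c v0 \<tau>"
        unfolding vn_eq D2(2) D1(2) Dn(2) cf(4) using False by (simp add: s_def h_def \<sigma>_def)
      ultimately show ?thesis by blast
    qed
    then obtain D where D: "good Bfin D" "D 0 = vn t n c v0 \<tau>" by blast
    have dD: "dfam D" using D(1) unfolding good_def by auto
    have "(deriv ^^ j) (vn t n c v0 \<tau>) x = D j x" using dfam_deriv[OF dD j] D(2) by simp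
    also have "\<bar>D j x\<bar> \<le> Bfin * cosh (real j * x)" using D(1) j unfolding good_def by auto
    finally have "\<bar>(deriv ^^ j) (vn t n c v0 \<tau>) x\<bar> \<le> Bfin * cosh (real j * x)" .
    also have "\<dots> \<le> Bfin * cosh (4 * x)" using Bfin0 j
      by (intro mult_left_mono cosh_mono_abs) (auto simp: abs_mult intro!: mult_right_mono)
    finally show "\<bar>(deriv ^^ j) (vn t n c v0 \<tau>) x\<bar> \<le> Bfin * cosh (4 * x) + 1" by simp
  qed
qed

end
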